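(* Let $d\ge1$ and $n_1,\dots,n_d\ge1$ be integers, and let $G$ be the graph consisting of two vertices $v$ and $w$ joined by $d$ chains of lengths $n_1,\dots,n_d$ (the $k$-th chain is a path of $n_k$ edges from $v$ to $w$, and distinct chains share no vertices other than $v,w$). Then the pair $\{v,w\}$ has order $\mathrm{lcm}(n_1,\dots,n_d)\left(\frac1{n_1}+\dots+\frac1{n_d}\right)$.
   Context: Graphs may have multiple edges, no loops. For a graph with vertices $u_1,\dots,u_N$, let $c_{ij}$ ($i\neq j$) be the number of edges joining $u_i,u_j$, $c_{ii}=-\sum_{j\ne i}c_{ij}$, $M=(c_{ij})$. A pair $\{u_i,u_j\}$ has order $h>0$ if there is $S\in\mathbb{Z}^N$ with $MS=h(e_i-e_j)$ and $\gcd(s_1-s_N,\dots,s_{N-1}-s_N)=1$; equivalently, the class of $e_i-e_j$ in $\mathbb{Z}^N/\mathrm{Im}(M)$ has order exactly $h$. *)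

theory Defs
  imports Complex_Main
begin

text \<open>A multigraph (no loops) on a finite vertex set V is given by an edge-count
  function c, where c x y is the number of edges joining x and y.\<close>

definition lapM :: "'a set \<Rightarrow> ('a \<Rightarrow> 'a \<Rightarrow> nat) \<Rightarrow> 'a \<Rightarrow> 'a \<Rightarrow> int" where
  "lapM V c x y = (if x = y then - (\<Sum>z\<in>V - {x}. int (c x z)) else int (c x y))"

definition pair_has_order :: "'a set \<Rightarrow> ('a \<Rightarrow> 'a \<Rightarrow> nat) \<Rightarrow> 'a \<Rightarrow> 'a \<Rightarrow> int \<Rightarrow> bool" where
  "pair_has_order V c a b h \<longleftrightarrow> h > 0 \<and>
     (\<exists>S :: 'a \<Rightarrow> int.
        (\<forall>x\<in>V. (\<Sum>y\<in>V. lapM V c x y * S y)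
                 = h * ((if x = a then 1 else 0) - (if x = b then 1 else 0)))
      \<and> Gcd {S x - S y | x y. x \<in> V \<and> y \<in> V} = 1)"

text \<open>The graph of d chains between two vertices v = Vv and w = Vw.
  Chain k (k < d) has n k edges: Vv, Inner k 1, ..., Inner k (n k - 1), Vw.\<close>

datatype cvert = Vv | Vw | Inner nat nat

definition chain_pos :: "(nat \<Rightarrow> nat) \<Rightarrow> nat \<Rightarrow> nat \<Rightarrow> cvert" where
  "chain_pos n k j = (if j = 0 then Vv else if j = n k then Vw else Inner k j)"

definition chains_V :: "nat \<Rightarrow> (nat \<Rightarrow> nat) \<Rightarrow> cvert set" where
  "chains_V d n = {Vv, Vw} \<union> {Inner k j | k j. k < d \<and> 1 \<le> j \<and> j < n k}"

definition chains_c :: "nat \<Rightarrow> (nat \<Rightarrow> nat) \<Rightarrow> cvert \<Rightarrow> cvert \<Rightarrow> nat" where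
  "chains_c d n x y = card {(k, j). k < d \<and> j < n k \<and>
      ((chain_pos n k j = x \<and> chain_pos n k (Suc j) = y) \<or>
       (chain_pos n k j = y \<and> chain_pos n k (Suc j) = x))}"

end

theory Submission
  imports Defs
begin

lemma lap_sum:
  assumes "finite V" "x \<in> V"
  shows "(\<Sum>y\<in>V. lapM V c x y * S y) = (\<Sum>y\<in>V-{x}. int (c x y) * (S y - S x))"
proof -
  have "(\<Sum>y\<in>V. lapM V c x y * S y) = lapM V c x x * S x + (\<Sum>y\<in>V-{x}. lapM V c x y * S y)"
    using assms by (simp add: sum.remove)
  also have "(\<Sum>y\<in>V-{x}. lapM V c x y * S y) = (\<Sum>y\<in>V-{x}. int (c x y) * S y)"
    by (rule sum.cong) (auto simp: lapM_def)
  also have "lapM V c x x * S x = - (\<Sum>y\<in>V-{x}. int (c x y) * S x)"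
    by (simp add: lapM_def sum_distrib_right)
  finally show ?thesis by (simp add: sum_subtractf right_diff_distrib)
qed

definition EE :: "nat \<Rightarrow> (nat \<Rightarrow> nat) \<Rightarrow> (nat \<times> nat) set" where
  "EE d n = Sigma {..<d} (\<lambda>k. {..<n k})"

definition adj :: "(nat \<Rightarrow> nat) \<Rightarrow> nat \<times> nat \<Rightarrow> cvert \<Rightarrow> cvert \<Rightarrow> bool" where
  "adj n e x y = ((chain_pos n (fst e) (snd e) = x \<and> chain_pos n (fst e) (Suc (snd e)) = y) \<or>
       (chain_pos n (fst e) (snd e) = y \<and> chain_pos n (fst e) (Suc (snd e)) = x))"

lemma finite_EE: "finite (EE d n)" by (simp add: EE_def)

lemma c_sum: "int (chains_c d n x y) = (\<Sum>e\<in>EE d n. if adj n e x y then 1 else 0)"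
proof -
  have "{(k, j). k < d \<and> j < n k \<and>
      ((chain_pos n k j = x \<and> chain_pos n k (Suc j) = y) \<or>
       (chain_pos n k j = y \<and> chain_pos n k (Suc j) = x))} = {e \<in> EE d n. adj n e x y}"
    by (auto simp: EE_def adj_def)
  then have "chains_c d n x y = card {e \<in> EE d n. adj n e x y}" by (simp add: chains_c_def)
  also have "\<dots> = (\<Sum>e\<in>{e \<in> EE d n. adj n e x y}. 1)" by simp
  also have "\<dots> = (\<Sum>e\<in>EE d n. if adj n e x y then 1 else 0)"
    using finite_EE by (rule sum.inter_filter)
  finally show ?thesis by (simp, intro sum.cong) auto
qed

lemma pos_ne: "j < n k \<Longrightarrow> chain_pos n k j \<noteq> chain_pos n k (Suc j)"
  by (auto simp: chain_pos_def)

lemma pos_in: "k < d \<Longrightarrow> j \<le> n k \<Longrightarrow> chain_pos n k j \<in> chains_V d n"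
  by (auto simp: chain_pos_def chains_V_def)

lemma finite_V: "finite (chains_V d n)"
proof -
  have "chains_V d n \<subseteq> {Vv, Vw} \<union> (\<lambda>(k,j). Inner k j) ` (Sigma {..<d} (\<lambda>k. {..<n k}))"
    by (auto simp: chains_V_def)
  then show ?thesis by (rule finite_subset) auto
qed

lemma inner_sum:
  assumes "e \<in> EE d n" "x \<in> chains_V d n"
  shows "(\<Sum>y\<in>chains_V d n - {x}. (if adj n e x y then 1 else 0) * (S y - S x :: int))
    = (if x = chain_pos n (fst e) (snd e) then S (chain_pos n (fst e) (Suc (snd e))) - S x else 0)
    + (if x = chain_pos n (fst e) (Suc (snd e)) then S (chain_pos n (fst e) (snd e)) - S x else 0)"
proof -
  obtain k j where e: "e = (k, j)" "k < d" "j < n k" using assms(1) by (auto simp: EE_def)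
  define p where "p = chain_pos n k j"
  define q where "q = chain_pos n k (Suc j)"
  have pq: "p \<noteq> q" using pos_ne e by (simp add: p_def q_def)
  have pV: "p \<in> chains_V d n" "q \<in> chains_V d n" using pos_in e by (auto simp: p_def q_def)
  have "(\<Sum>y\<in>chains_V d n - {x}. (if adj n e x y then 1 else 0) * (S y - S x :: int))
     = (\<Sum>y\<in>chains_V d n - {x}. (if x = p then (if y = q then S y - S x else 0) else 0)
         + (if x = q then (if y = p then S y - S x else 0) else 0))"
    by (rule sum.cong) (use pq in \<open>auto simp: adj_def e p_def q_def\<close>)
  also have "\<dots> = (if x = p then S q - S x else 0) + (if x = q then S p - S x else 0)"
    using pq pV finite_V by (simp add: sum.distrib)
  finally show ?thesis by (simp add: e p_def q_def)
qed

lemma MS_formula: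
  assumes "x \<in> chains_V d n"
    and Spos: "\<And>k j. k < d \<Longrightarrow> j < n k \<Longrightarrow>
       S (chain_pos n k (Suc j)) - S (chain_pos n k j) = (a k :: int)"
  shows "(\<Sum>y\<in>chains_V d n. lapM (chains_V d n) (chains_c d n) x y * S y)
    = (\<Sum>k<d. \<Sum>j<n k. (if x = chain_pos n k j then a k else 0)
          - (if x = chain_pos n k (Suc j) then a k else 0))"
proof -
  let ?V = "chains_V d n"
  have "(\<Sum>y\<in>?V. lapM ?V (chains_c d n) x y * S y)
      = (\<Sum>y\<in>?V-{x}. int (chains_c d n x y) * (S y - S x))"
    using lap_sum[OF finite_V assms(1)] .
  also have "\<dots> = (\<Sum>y\<in>?V-{x}. \<Sum>e\<in>EE d n. (if adj n e x y then 1 else 0) * (S y - S x))"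
    by (simp add: c_sum sum_distrib_right)
  also have "\<dots> = (\<Sum>e\<in>EE d n. \<Sum>y\<in>?V-{x}. (if adj n e x y then 1 else 0) * (S y - S x))"
    by (rule sum.swap)
  also have "\<dots> = (\<Sum>e\<in>EE d n. (if x = chain_pos n (fst e) (snd e) then a (fst e) else 0)
          - (if x = chain_pos n (fst e) (Suc (snd e)) then a (fst e) else 0))"
  proof (rule sum.cong[OF refl])
    fix e assume e: "e \<in> EE d n"
    then obtain k j where kj: "e = (k, j)" "k < d" "j < n k" by (auto simp: EE_def)
    have "S (chain_pos n k (Suc j)) - S (chain_pos n k j) = a k" using Spos kj by auto
    then show "(\<Sum>y\<in>?V-{x}. (if adj n e x y then 1 else 0) * (S y - S x)) =
      (if x = chain_pos n (fst e) (snd e) then a (fst e) else 0)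
          - (if x = chain_pos n (fst e) (Suc (snd e)) then a (fst e) else 0)"
      using inner_sum[OF e assms(1), of S] pos_ne[of j n k, OF kj(3)] kj by auto
  qed
  also have "\<dots> = (\<Sum>k<d. \<Sum>j<n k. (if x = chain_pos n k j then a k else 0)
          - (if x = chain_pos n k (Suc j) then a k else 0))"
    by (simp add: EE_def sum.Sigma split_def)
  finally show ?thesis .
qed

theorem claim2p6:
  fixes d :: nat and n :: "nat \<Rightarrow> nat"
  assumes "d \<ge> 1" and "\<forall>k<d. n k \<ge> 1"
  shows "\<exists>h :: int.
           (of_int h :: rat) = of_nat (Lcm (n ` {..<d})) * (\<Sum>k<d. 1 / of_nat (n k))
         \<and> pair_has_order (chains_V d n) (chains_c d n) Vv Vw h"
proof -
  define L where "L = Lcm (n ` {..<d})"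
  have npos: "k < d \<Longrightarrow> n k > 0" for k using assms(2) by auto
  have ndvd: "k < d \<Longrightarrow> n k dvd L" for k by (simp add: L_def)
  have Lpos: "L > 0"
  proof -
    have "0 \<notin> n ` {..<d}" using npos by (metis imageE lessThan_iff less_irrefl)
    then have "L \<noteq> 0" unfolding L_def by (subst Lcm_0_iff) auto
    then show ?thesis by simp
  qed
  define a where "a k = int (L div n k)" for k
  have na: "k < d \<Longrightarrow> int (n k) * a k = int L" for k
    using ndvd by (simp add: a_def flip: of_nat_mult)
  have apos: "k < d \<Longrightarrow> a k > 0" for k
  proof -
    assume k: "k < d"
    have "0 < int (n k) * a k" using na[OF k] Lpos by simp
    then show "a k > 0" using npos[OF k] by (simp add: zero_less_mult_iff)
  qed
  define S where "S x = (case x of Vv \<Rightarrow> 0 | Vw \<Rightarrow> int L | Inner k j \<Rightarrow> int j * a k)" for x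
  have Sp: "k < d \<Longrightarrow> j \<le> n k \<Longrightarrow> S (chain_pos n k j) = int j * a k" for k j
    using na by (auto simp: S_def chain_pos_def)
  have Spos: "S (chain_pos n k (Suc j)) - S (chain_pos n k j) = a k" if "k < d" "j < n k" for k j
    using Sp[of k j] Sp[of k "Suc j"] that by (simp add: algebra_simps)
  define h where "h = (\<Sum>k<d. a k)"
  have hpos: "h > 0" unfolding h_def
    using apos assms(1) by (intro sum_pos) (auto simp: lessThan_empty_iff)
  have hrat: "(of_int h :: rat) = of_nat L * (\<Sum>k<d. 1 / of_nat (n k))"
  proof -
    have "(of_int h :: rat) = (\<Sum>k<d. of_int (a k))" by (simp add: h_def)
    also have "\<dots> = (\<Sum>k<d. of_nat L * (1 / of_nat (n k)))"
    proof (rule sum.cong[OF refl])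
      fix k assume "k \<in> {..<d}"
      then have k: "k < d" by simp
      have "(of_int (int (n k) * a k) :: rat) = of_nat L" using na[OF k] by simp
      then have "of_nat (n k) * (of_int (a k) :: rat) = of_nat L" by simp
      then show "(of_int (a k) :: rat) = of_nat L * (1 / of_nat (n k))"
        using npos[OF k] by (simp add: field_simps)
    qed
    finally show ?thesis by (simp add: sum_distrib_left)
  qed
  have MS: "(\<Sum>y\<in>chains_V d n. lapM (chains_V d n) (chains_c d n) x y * S y)
        = h * ((if x = Vv then 1 else 0) - (if x = Vw then 1 else 0))"
    if x: "x \<in> chains_V d n" for x
  proof -
    have F: "(\<Sum>y\<in>chains_V d n. lapM (chains_V d n) (chains_c d n) x y * S y)
      = (\<Sum>k<d. \<Sum>j<n k. (if x = chain_pos n k j then a k else 0)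
          - (if x = chain_pos n k (Suc j) then a k else 0))"
      by (rule MS_formula[OF x Spos])
    show ?thesis
    proof (cases x)
      case Vv
      have "(\<Sum>k<d. \<Sum>j<n k. (if x = chain_pos n k j then a k else 0)
          - (if x = chain_pos n k (Suc j) then a k else 0))
          = (\<Sum>k<d. \<Sum>j<n k. (if j = 0 then a k else 0))"
        by (intro sum.cong refl) (auto simp: Vv chain_pos_def)
      also have "\<dots> = h" using npos by (simp add: h_def)
      finally show ?thesis using F Vv by simp
    next
      case Vw
      have "(\<Sum>k<d. \<Sum>j<n k. (if x = chain_pos n k j then a k else 0)
          - (if x = chain_pos n k (Suc j) then a k else 0))
          = (\<Sum>k<d. \<Sum>j<n k. - (if j = n k - 1 then a k else 0))"
        by (intro sum.cong refl) (auto simp: Vw chain_pos_def)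
      also have "\<dots> = - h" using npos by (simp add: h_def sum_negf)
      finally show ?thesis using F Vw by simp
    next
      case (Inner k0 j0)
      have kj: "k0 < d" "1 \<le> j0" "j0 < n k0" using x Inner by (auto simp: chains_V_def)
      have "(\<Sum>k<d. \<Sum>j<n k. (if x = chain_pos n k j then a k else 0)
          - (if x = chain_pos n k (Suc j) then a k else 0))
          = (\<Sum>e\<in>EE d n. (if e = (k0, j0) then a k0 else 0) - (if e = (k0, j0 - 1) then a k0 else 0))"
      proof -
        have "(\<Sum>k<d. \<Sum>j<n k. (if x = chain_pos n k j then a k else 0)
          - (if x = chain_pos n k (Suc j) then a k else 0))
          = (\<Sum>e\<in>EE d n. (if x = chain_pos n (fst e) (snd e) then a (fst e) else 0)
          - (if x = chain_pos n (fst e) (Suc (snd e)) then a (fst e) else 0))"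
          by (simp add: EE_def sum.Sigma split_def)
        also have "\<dots> = (\<Sum>e\<in>EE d n. (if e = (k0, j0) then a k0 else 0) - (if e = (k0, j0 - 1) then a k0 else 0))"
        proof (rule sum.cong[OF refl])
          fix e assume "e \<in> EE d n"
          then obtain k j where e: "e = (k, j)" "k < d" "j < n k" by (auto simp: EE_def)
          have 1: "(x = chain_pos n k j) = (e = (k0, j0))"
            using e kj unfolding Inner chain_pos_def by auto
          have 2: "(x = chain_pos n k (Suc j)) = (e = (k0, j0 - 1))"
            using e kj unfolding Inner chain_pos_def by auto
          show "(if x = chain_pos n (fst e) (snd e) then a (fst e) else 0)
          - (if x = chain_pos n (fst e) (Suc (snd e)) then a (fst e) else 0) =
            (if e = (k0, j0) then a k0 else 0) - (if e = (k0, j0 - 1) then a k0 else 0)"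
            using 1 2 e by auto
        qed
        finally show ?thesis .
      qed
      also have "\<dots> = 0"
      proof -
        have "j0 - 1 < n k0" using kj by simp
        then show ?thesis using kj finite_EE[of d n] by (simp add: sum_subtractf EE_def)
      qed
      finally show ?thesis using F Inner by simp
    qed
  qed
  have G: "Gcd {S x - S y | x y. x \<in> chains_V d n \<and> y \<in> chains_V d n} = 1"
  proof -
    define g where "g = Gcd {S x - S y | x y. x \<in> chains_V d n \<and> y \<in> chains_V d n}"
    have VvV: "Vv \<in> chains_V d n" and VwV: "Vw \<in> chains_V d n" by (auto simp: chains_V_def)
    have gL: "g dvd int L"
    proof -
      have "S Vw - S Vv \<in> {S x - S y | x y. x \<in> chains_V d n \<and> y \<in> chains_V d n}"
        using VvV VwV by blast
      then show ?thesis unfolding g_def by (auto simp: S_def dest: Gcd_dvd)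
    qed
    have ga: "g dvd a k" if k: "k < d" for k
    proof -
      have "S (chain_pos n k 1) - S (chain_pos n k 0) \<in> {S x - S y | x y. x \<in> chains_V d n \<and> y \<in> chains_V d n}"
        using pos_in[of k d 1 n] pos_in[of k d 0 n] k npos[OF k] by fastforce
      then have "g dvd S (chain_pos n k 1) - S (chain_pos n k 0)" unfolding g_def by (rule Gcd_dvd)
      then show ?thesis using Spos[of k 0] k npos[OF k] by simp
    qed
    have g0: "g \<ge> 0" unfolding g_def by simp
    obtain q where q: "int L = g * q" using gL by (auto elim: dvdE)
    have gne: "g \<noteq> 0" using q Lpos by auto
    have "int (n k) dvd q" if k: "k < d" for k
    proof -
      obtain r where r: "a k = g * r" using ga[OF k] by (auto elim: dvdE)
      have "g * q = g * (int (n k) * r)" using na[OF k] q r by (metis mult.left_commute)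
      then have "q = int (n k) * r" using gne by simp
      then show ?thesis by simp
    qed
    moreover have "q > 0"
    proof -
      have "0 < g * q" using q Lpos by simp
      moreover have "g > 0" using g0 gne by simp
      ultimately show ?thesis by (simp add: zero_less_mult_iff)
    qed
    ultimately have "n k dvd nat q" if "k < d" for k
      using that by (metis int_dvd_int_iff int_nat_eq less_imp_le not_le)
    then have "L dvd nat q" unfolding L_def
      by (intro Lcm_least) auto
    then have "int L dvd q" using \<open>q > 0\<close> by (metis int_dvd_int_iff int_nat_eq less_imp_le not_le)
    then obtain r where "q = int L * r" by (auto elim: dvdE)
    then have "int L * 1 = int L * (g * r)" using q by (simp add: algebra_simps)
    then have "g * r = 1" using Lpos by simp
    then show ?thesis using g0 unfolding g_def[symmetric] by (simp add: zmult_eq_1_iff pos_zmult_eq_1_iff)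
  qed
  show ?thesis
    using hrat hpos MS G unfolding pair_has_order_def L_def by blast
qed

end
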